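(* Let $\mathcal{H}\in\mathbb{C}^{[n_1,\ldots,n_m]}$. Then $\mathcal{H}$ is HSOS if and only if $\mathfrak{m}(\mathcal{H})$ is positive semidefinite.
   Context: $\mathbb{C}^{[n_1,\ldots,n_m]}$ is the real vector space of tensors $\mathcal{H}\in\mathbb{C}^{n_1\times\cdots\times n_m\times n_1\times\cdots\times n_m}$ with $\mathcal{H}_{i_1\ldots i_m j_1\ldots j_m}=\overline{\mathcal{H}_{j_1\ldots j_m i_1\ldots i_m}}$. For $x=(x_1,\ldots,x_m)$, $x_i\in\mathbb{C}^{n_i}$, $\mathcal{H}(x,\overline{x}):=\langle\mathcal{H},x_1\otimes\cdots\otimes x_m\otimes\overline{x_1}\otimes\cdots\otimes\overline{x_m}\rangle$ with $\langle\mathcal{A},\mathcal{B}\rangle=\sum\mathcal{A}_{\cdot}\overline{\mathcal{B}_{\cdot}}$. $\mathcal{H}$ is HSOS (Hermitian sum of squares) if $\mathcal{H}(x,\overline{x})=|p_1(x)|^2+\cdots+|p_k(x)|^2$ for some complex polynomials $p_i$ in $x$ (not involving $\overline{x}$). The Hermitian flattening $\mathfrak{m}(\mathcal{H})$ is the $N\times N$ Hermitian matrix ($N=n_1\cdots n_m$) with $(\mathfrak{m}(\mathcal{H}))_{IJ}=\mathcal{H}_{i_1\ldots i_mj_1\ldots j_m}$ for $I=(i_1,\ldots,i_m)$, $J=(j_1,\ldots,j_m)$ in lexicographic order; equivalently $\mathfrak{m}$ is linear with $\mathfrak{m}(v_1\otimes\cdots\otimes v_m\otimes\overline{v_1}\otimes\cdots\otimes\overline{v_m})=(v_1v_1^*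 )\boxtimes\cdots\boxtimes(v_mv_m^* )$, $\boxtimes$ the Kronecker product. *)

theory Defs
  imports "HOL-Analysis.Analysis" "HOL-Library.Poly_Mapping"
begin

text \<open>Dimensions: a list n = [n_1,...,n_m]; m = length n.
  Index tuples I = (i_1,...,i_m) are lists of length m with I!k < n!k (0-based).\<close>

definition idx :: "nat list \<Rightarrow> nat list set" where
  "idx n = {I. length I = length n \<and> (\<forall>k<length n. I ! k < n ! k)}"

text \<open>Tensors of order 2m: functions of two index tuples (I,J);
  H I J = H_{i_1...i_m j_1...j_m}. Membership in C^[n_1,...,n_m] (Hermitian condition).\<close>

definition herm_tensor :: "nat list \<Rightarrow> (nat list \<Rightarrow> nat list \<Rightarrow> complex) \<Rightarrow> bool" where
  "herm_tensor n H \<longleftrightarrow> (\<forall>I\<in>idx n. \<forall>J\<in>idx n. H I J = cnj (H J I))"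

text \<open>A point x = (x_1,...,x_m), x_k \<in> C^{n_k}, is a function on variable pairs (k,j),
  x (k,j) = j-th coordinate of x_k.\<close>

text \<open>H(x, conj x) = < H, x_1 (x) ... (x) x_m (x) conj x_1 (x) ... (x) conj x_m >,
  with <A,B> = sum A * conj B.\<close>

definition Hform :: "nat list \<Rightarrow> (nat list \<Rightarrow> nat list \<Rightarrow> complex) \<Rightarrow> (nat \<times> nat \<Rightarrow> complex) \<Rightarrow> complex" where
  "Hform n H x = (\<Sum>I\<in>idx n. \<Sum>J\<in>idx n.
      H I J * cnj ((\<Prod>k<length n. x (k, I ! k)) * (\<Prod>k<length n. cnj (x (k, J ! k)))))"

type_synonym cpoly = "((nat \<times> nat) \<Rightarrow>\<^sub>0 nat) \<Rightarrow>\<^sub>0 complex"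

definition poly_eval :: "cpoly \<Rightarrow> (nat \<times> nat \<Rightarrow> complex) \<Rightarrow> complex" where
  "poly_eval p x = (\<Sum>\<alpha>\<in>Poly_Mapping.keys p. Poly_Mapping.lookup p \<alpha> * (\<Prod>v\<in>Poly_Mapping.keys \<alpha>. x v ^ Poly_Mapping.lookup \<alpha> v))"

definition poly_in_vars :: "nat list \<Rightarrow> cpoly \<Rightarrow> bool" where
  "poly_in_vars n p \<longleftrightarrow> (\<forall>\<alpha>\<in>Poly_Mapping.keys p. \<forall>v\<in>Poly_Mapping.keys \<alpha>. fst v < length n \<and> snd v < n ! fst v)"

definition HSOS :: "nat list \<Rightarrow> (nat list \<Rightarrow> nat list \<Rightarrow> complex) \<Rightarrow> bool" where
  "HSOS n H \<longleftrightarrow> (\<exists>ps :: cpoly list. (\<forall>p\<in>set ps. poly_in_vars n p) \<and>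
      (\<forall>x. Hform n H x = complex_of_real (\<Sum>p\<leftarrow>ps. (cmod (poly_eval p x))\<^sup>2)))"

text \<open>Lexicographic enumeration of index tuples: position a < n_1...n_m corresponds to
  the tuple unflat n a (first index most significant).\<close>

fun unflat :: "nat list \<Rightarrow> nat \<Rightarrow> nat list" where
  "unflat [] a = []"
| "unflat (k # ns) a = (a div prod_list ns) # unflat ns (a mod prod_list ns)"

text \<open>Hermitian flattening, an N x N matrix (N = n_1...n_m), given as entries on {0..<N}^2.\<close>

definition flattening :: "nat list \<Rightarrow> (nat list \<Rightarrow> nat list \<Rightarrow> complex) \<Rightarrow> nat \<Rightarrow> nat \<Rightarrow> complex" where
  "flattening n H a b = H (unflat n a) (unflat n b)"

definition psd :: "nat \<Rightarrow> (nat \<Rightarrow> nat \<Rightarrow> complex) \<Rightarrow> bool" where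
  "psd N M \<longleftrightarrow> (\<forall>a<N. \<forall>b<N. M a b = cnj (M b a)) \<and>
     (\<forall>v :: nat \<Rightarrow> complex. let q = (\<Sum>a<N. \<Sum>b<N. cnj (v a) * M a b * v b) in
        Im q = 0 \<and> Re q \<ge> 0)"

end

theory Submission
  imports Defs "HOL-Computational_Algebra.Polynomial" "HOL-Library.Nat_Bijection"
begin

lemma infinite_unit_circle: "infinite {w::complex. cmod w = 1}"
proof
  assume fin: "finite {w::complex. cmod w = 1}"
  let ?f = "\<lambda>x::real. Complex x (sqrt (1 - x\<^sup>2))"
  have "?f ` {0<..<1} \<subseteq> {w::complex. cmod w = 1}"
  proof
    fix w assume "w \<in> ?f ` {0<..<1}"
    then obtain x::real where x: "0 < x" "x < 1" "w = ?f x" by auto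
    have "x * x < 1" using x by (metis mult_less_cancel_right1 less_trans mult_strict_mono' less_eq_real_def zero_less_one mult_1_right)
    hence "\<bar>1 - x * x\<bar> = 1 - x * x" by simp
    thus "w \<in> {w. cmod w = 1}" using x by (simp add: cmod_def power2_eq_square)
  qed
  moreover have "inj_on ?f {0<..<1}" by (auto simp: inj_on_def)
  ultimately have "finite {0<..<(1::real)}"
    using fin finite_subset inj_on_finite by blast
  then show False using infinite_Ioo[of "0::real" 1] by simp
qed

lemma stage1:
  fixes c :: "nat \<Rightarrow> nat \<Rightarrow> complex"
  assumes h: "\<And>w. (\<Sum>a<K. \<Sum>b<K. c a b * w^a * cnj w^b) = 0"
  shows "(\<Sum>a<K. \<Sum>b<K. if a + b = D then c a b * w^a * cnj w^b else 0) = 0"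
proof -
  define P where "P = (\<Sum>a<K. \<Sum>b<K. monom (c a b * w^a * cnj w^b) (a+b))"
  have "poly P (of_real t) = 0" for t
  proof -
    have "poly P (of_real t) = (\<Sum>a<K. \<Sum>b<K. c a b * (of_real t * w)^a * cnj (of_real t * w)^b)"
      unfolding P_def poly_sum poly_monom
      by (intro sum.cong refl) (simp add: power_mult_distrib power_add)
    also have "\<dots> = 0" by (rule h)
    finally show ?thesis .
  qed
  hence "range complex_of_real \<subseteq> {x. poly P x = 0}" by auto
  moreover have "infinite (range complex_of_real)"
    using inj_of_real finite_imageD by (metis infinite_UNIV_char_0)
  ultimately have "P = 0" using poly_roots_finite finite_subset by blast
  hence "coeff P D = 0" by simp
  thus ?thesis unfolding P_def coeff_sum coeff_monom
    by (simp add: eq_commute[of D])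
qed

lemma coeff_zero:
  fixes c :: "nat \<Rightarrow> nat \<Rightarrow> complex"
  assumes h: "\<And>w. (\<Sum>a<K. \<Sum>b<K. c a b * w^a * cnj w^b) = 0"
  and a0: "a0 < K" and b0: "b0 < K"
  shows "c a0 b0 = 0"
proof -
  define D where "D = a0 + b0"
  define Q where "Q = (\<Sum>a<K. \<Sum>b<K. monom (if a + b = D then c a b else 0) (2*a))"
  have "poly Q w = 0" if w: "cmod w = 1" for w
  proof -
    have ww: "w * cnj w = 1" using w by (simp add: complex_norm_square[symmetric])
    have "poly Q w = (\<Sum>a<K. \<Sum>b<K. w^D * (if a + b = D then c a b * w^a * cnj w^b else 0))"
      unfolding Q_def poly_sum poly_monom
    proof (intro sum.cong refl)
      fix a b assume "a \<in> {..<K}" "b \<in> {..<K}"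
      show "(if a + b = D then c a b else 0) * w ^ (2 * a) =
          w ^ D * (if a + b = D then c a b * w ^ a * cnj w ^ b else 0)"
      proof (cases "a + b = D")
        case True
        have e: "w^(2*a) = w^a*w^a" by (simp add: mult_2 power_add)
        have "w ^ D * (c a b * w ^ a * cnj w ^ b) = c a b * w^(2*a) * (w * cnj w)^b"
          unfolding True[symmetric] e by (simp add: power_add power_mult_distrib algebra_simps)
        then show ?thesis using True ww by (metis mult_1_right power_one)
      qed simp
    qed
    also have "\<dots> = w^D * (\<Sum>a<K. \<Sum>b<K. if a + b = D then c a b * w^a * cnj w^b else 0)"
      by (simp add: sum_distrib_left)
    also have "\<dots> = 0" using stage1[OF h] by simp
    finally show ?thesis .
  qed
  hence "Q = 0" using poly_roots_finite finite_subset infinite_unit_circle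
    by (metis (mono_tags, lifting) mem_Collect_eq subsetI)
  hence "coeff Q (2*a0) = 0" by simp
  moreover have "coeff Q (2*a0) = (\<Sum>a<K. \<Sum>b<K. if a = a0 then (if a + b = D then c a b else 0) else 0)"
    unfolding Q_def coeff_sum coeff_monom by (simp add: eq_commute[of "2*a0"])
  moreover have "\<dots> = (\<Sum>b<K. if a0 + b = D then c a0 b else 0)"
  proof -
    have "\<And>a. (\<Sum>b<K. if a = a0 then (if a + b = D then c a b else 0) else 0) =
       (if a = a0 then (\<Sum>b<K. if a + b = D then c a b else 0) else 0)" by simp
    then show ?thesis using a0 by (simp only: sum.delta' finite_lessThan) simp
  qed
  moreover have "\<dots> = c a0 b0" using b0 by (simp add: D_def sum.delta)
  ultimately show ?thesis by simp
qed

lemma group_sum: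
  fixes f :: "'s \<Rightarrow> complex"
  assumes S: "finite S" and AK: "\<And>s. s \<in> S \<Longrightarrow> A s < K" and BK: "\<And>s. s \<in> S \<Longrightarrow> B s < K"
  shows "(\<Sum>s\<in>S. f s * w^(A s) * cnj w^(B s)) =
    (\<Sum>a<K. \<Sum>b<K. (\<Sum>s\<in>{s\<in>S. A s = a \<and> B s = b}. f s) * w^a * cnj w^b)"
proof -
  have "(\<Sum>a<K. \<Sum>b<K. (\<Sum>s\<in>{s\<in>S. A s = a \<and> B s = b}. f s) * w^a * cnj w^b)
     = (\<Sum>a<K. \<Sum>b<K. \<Sum>s\<in>S. if A s = a \<and> B s = b then f s * w^(A s) * cnj w^(B s) else 0)"
    using S by (simp add: sum.inter_filter sum_distrib_right) (intro sum.cong refl, auto)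
  also have "\<dots> = (\<Sum>s\<in>S. \<Sum>a<K. \<Sum>b<K. if A s = a \<and> B s = b then f s * w^(A s) * cnj w^(B s) else 0)"
    by (rule trans[OF sum.cong[OF refl sum.swap] sum.swap])
  also have "\<dots> = (\<Sum>s\<in>S. f s * w^(A s) * cnj w^(B s))"
  proof (rule sum.cong[OF refl])
    fix s assume s: "s \<in> S"
    have "(\<Sum>a<K. \<Sum>b<K. if A s = a \<and> B s = b then f s * w^(A s) * cnj w^(B s) else 0)
       = (\<Sum>a<K. if A s = a then (\<Sum>b<K. if B s = b then f s * w^(A s) * cnj w^(B s) else 0) else 0)"
      by (intro sum.cong refl) auto
    also have "\<dots> = f s * w^(A s) * cnj w^(B s)" using AK[OF s] BK[OF s] by simp
    finally show "(\<Sum>a<K. \<Sum>b<K. if A s = a \<and> B s = b then f s * w^(A s) * cnj w^(B s) else 0) = f s * w^(A s) * cnj w^(B s)" .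
  qed
  finally show ?thesis by simp
qed

lemma coeff_extract:
  fixes f :: "'s \<Rightarrow> complex" and g :: "'t \<Rightarrow> complex"
  assumes S: "finite S" and T: "finite T"
  and h: "\<And>w. (\<Sum>s\<in>S. f s * w^(A s) * cnj w^(B s)) = (\<Sum>t\<in>T. g t * w^(A' t) * cnj w^(B' t))"
  shows "(\<Sum>s\<in>{s\<in>S. A s = a \<and> B s = b}. f s) = (\<Sum>t\<in>{t\<in>T. A' t = a \<and> B' t = b}. g t)"
proof -
  define K where "K = Suc (a + b + (\<Sum>s\<in>S. A s + B s) + (\<Sum>t\<in>T. A' t + B' t))"
  have bS: "A s < K" "B s < K" if "s \<in> S" for s
  proof -
    have "A s + B s \<le> (\<Sum>s\<in>S. A s + B s)" using S that by (intro member_le_sum) auto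
    thus "A s < K" "B s < K" unfolding K_def by auto
  qed
  have bT: "A' t < K" "B' t < K" if "t \<in> T" for t
  proof -
    have "A' t + B' t \<le> (\<Sum>u\<in>T. A' u + B' u)" using T that by (intro member_le_sum) auto
    thus "A' t < K" "B' t < K" unfolding K_def by auto
  qed
  define c where "c a b = (\<Sum>s\<in>{s\<in>S. A s = a \<and> B s = b}. f s) - (\<Sum>t\<in>{t\<in>T. A' t = a \<and> B' t = b}. g t)" for a b
  have "(\<Sum>a<K. \<Sum>b<K. c a b * w^a * cnj w^b) = 0" for w
    using h[of w] group_sum[OF S bS, where f=f and w=w] group_sum[OF T bT, where f=g and w=w]
    unfolding c_def by (simp add: left_diff_distrib sum_subtractf)
  hence "c a b = 0" by (rule coeff_zero) (auto simp: K_def)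
  thus ?thesis unfolding c_def by simp
qed


lemma digits_bound:
  fixes e :: "nat \<Rightarrow> nat"
  assumes "\<And>u. u < E \<Longrightarrow> e u < D"
  shows "(\<Sum>u<E. e u * D^u) < D^E"
  using assms
proof (induction E)
  case 0 then show ?case by simp
next
  case (Suc E)
  have "(\<Sum>u<Suc E. e u * D^u) = (\<Sum>u<E. e u * D^u) + e E * D^E" by simp
  also have "\<dots> < D^E + e E * D^E" using Suc by simp
  also have "\<dots> = (Suc (e E)) * D^E" by simp
  also have "\<dots> \<le> D * D^E" using Suc.prems[of E] by (intro mult_right_mono) auto
  finally show ?case by simp
qed

lemma digits_unique:
  fixes e1 e2 :: "nat \<Rightarrow> nat"
  assumes "\<And>u. u < E \<Longrightarrow> e1 u < D" "\<And>u. u < E \<Longrightarrow> e2 u < D"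
    and "(\<Sum>u<E. e1 u * D^u) = (\<Sum>u<E. e2 u * D^u)"
  shows "\<forall>u<E. e1 u = e2 u"
  using assms
proof (induction E)
  case 0 then show ?case by simp
next
  case (Suc E)
  let ?s1 = "\<Sum>u<E. e1 u * D^u" and ?s2 = "\<Sum>u<E. e2 u * D^u"
  have b1: "?s1 < D^E" using Suc.prems by (intro digits_bound) auto
  have b2: "?s2 < D^E" using Suc.prems by (intro digits_bound) auto
  have eq: "?s1 + e1 E * D^E = ?s2 + e2 E * D^E" using Suc.prems(3) by simp
  have nz: "D^E \<noteq> 0" using b1 by linarith
  have "(?s1 + e1 E * D^E) div D^E = e1 E" using b1 nz by (simp add: div_less)
  moreover have "(?s2 + e2 E * D^E) div D^E = e2 E" using b2 nz by (simp add: div_less)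
  ultimately have top: "e1 E = e2 E" using eq by simp
  have s: "?s1 = ?s2" using eq top by simp
  have p1: "\<And>u. u < E \<Longrightarrow> e1 u < D" using Suc.prems(1) by simp
  have p2: "\<And>u. u < E \<Longrightarrow> e2 u < D" using Suc.prems(2) by simp
  have "\<forall>u<E. e1 u = e2 u" by (rule Suc.IH[OF p1 p2 s])
  with top show ?case using less_Suc_eq by auto
qed

definition kron :: "nat \<Rightarrow> ((nat \<times> nat) \<Rightarrow>\<^sub>0 nat) \<Rightarrow> nat" where
  "kron D \<alpha> = (\<Sum>v\<in>Poly_Mapping.keys \<alpha>. Poly_Mapping.lookup \<alpha> v * D ^ prod_encode v)"

lemma kron_superset:
  assumes "finite S" "Poly_Mapping.keys \<alpha> \<subseteq> S"
  shows "kron D \<alpha> = (\<Sum>v\<in>S. Poly_Mapping.lookup \<alpha> v * D ^ prod_encode v)"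
  unfolding kron_def using assms by (intro sum.mono_neutral_left) (auto simp: in_keys_iff)

lemma kron_digits:
  assumes "\<And>v. v \<in> Poly_Mapping.keys \<alpha> \<Longrightarrow> prod_encode v < E"
  shows "kron D \<alpha> = (\<Sum>u<E. Poly_Mapping.lookup \<alpha> (prod_decode u) * D ^ u)"
proof -
  have "kron D \<alpha> = (\<Sum>v\<in>prod_decode ` {..<E}. Poly_Mapping.lookup \<alpha> v * D ^ prod_encode v)"
  proof (rule kron_superset)
    show "Poly_Mapping.keys \<alpha> \<subseteq> prod_decode ` {..<E}"
    proof
      fix v assume "v \<in> Poly_Mapping.keys \<alpha>"
      then have "prod_encode v < E" by (rule assms)
      then show "v \<in> prod_decode ` {..<E}" by (metis lessThan_iff image_eqI prod_encode_inverse)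
    qed
  qed simp
  also have "\<dots> = (\<Sum>u<E. Poly_Mapping.lookup \<alpha> (prod_decode u) * D ^ u)"
    by (subst sum.reindex) (auto intro: inj_onI simp: inj_prod_decode[THEN injD])
  finally show ?thesis .
qed

lemma kron_inj:
  assumes a: "\<And>v. Poly_Mapping.lookup \<alpha> v < D" and b: "\<And>v. Poly_Mapping.lookup \<beta> v < D"
    and eq: "kron D \<alpha> = kron D \<beta>"
  shows "\<alpha> = \<beta>"
proof -
  define E where "E = Suc (\<Sum>v\<in>Poly_Mapping.keys \<alpha> \<union> Poly_Mapping.keys \<beta>. prod_encode v)"
  have bound: "prod_encode v < E" if "v \<in> Poly_Mapping.keys \<alpha> \<union> Poly_Mapping.keys \<beta>" for v
  proof -
    have "prod_encode v \<le> (\<Sum>v\<in>Poly_Mapping.keys \<alpha> \<union> Poly_Mapping.keys \<beta>. prod_encode v)"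
      using that by (intro member_le_sum) auto
    thus ?thesis unfolding E_def by simp
  qed
  have "\<forall>u<E. Poly_Mapping.lookup \<alpha> (prod_decode u) = Poly_Mapping.lookup \<beta> (prod_decode u)"
    using eq kron_digits[of \<alpha> E D] kron_digits[of \<beta> E D] bound a b
    by (intro digits_unique[where D=D]) auto
  show ?thesis
  proof (rule poly_mapping_eqI)
    fix v
    show "Poly_Mapping.lookup \<alpha> v = Poly_Mapping.lookup \<beta> v"
    proof (cases "v \<in> Poly_Mapping.keys \<alpha> \<union> Poly_Mapping.keys \<beta>")
      case True
      then have "prod_encode v < E" by (rule bound)
      with \<open>\<forall>u<E. _\<close> show ?thesis by (metis prod_encode_inverse)
    next
      case False then show ?thesis by (simp add: in_keys_iff)
    qed
  qed
qed

definition monoI :: "nat list \<Rightarrow> ((nat \<times> nat) \<Rightarrow>\<^sub>0 nat)" where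
  "monoI I = (\<Sum>k<length I. Poly_Mapping.single (k, I ! k) 1)"

lemma lookup_mono: "Poly_Mapping.lookup (monoI I) v = (if fst v < length I \<and> snd v = I ! fst v then 1 else 0)"
proof -
  obtain a b where v: "v = (a, b)" by force
  have "Poly_Mapping.lookup (monoI I) v = (\<Sum>k<length I. if k = a \<and> I ! k = b then 1 else 0)"
    unfolding monoI_def lookup_sum lookup_single v by (intro sum.cong refl) (auto simp: when_def)
  also have "\<dots> = (\<Sum>k<length I. if k = a then (if I ! a = b then 1 else 0) else 0)"
    by (intro sum.cong refl) auto
  also have "\<dots> = (if a < length I \<and> b = I ! a then 1 else 0)" by (simp add: sum.delta')
  finally show ?thesis using v by auto
qed

lemma keys_mono: "Poly_Mapping.keys (monoI I) = (\<lambda>k. (k, I ! k)) ` {..<length I}"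
  by (auto simp: in_keys_iff lookup_mono split: if_splits)

lemma mono_inj: assumes "length I = length J" "monoI I = monoI J" shows "I = J"
proof (rule nth_equalityI)
  fix k assume "k < length I"
  then have "Poly_Mapping.lookup (monoI I) (k, I ! k) = 1" by (simp add: lookup_mono)
  then have "Poly_Mapping.lookup (monoI J) (k, I ! k) = 1" using assms by simp
  then show "I ! k = J ! k" by (simp add: lookup_mono split: if_splits)
qed (use assms in simp)

lemma kron_mono: "kron D (monoI I) = (\<Sum>k<length I. D ^ prod_encode (k, I ! k))"
proof -
  have "kron D (monoI I) = (\<Sum>v\<in>(\<lambda>k. (k, I ! k)) ` {..<length I}. Poly_Mapping.lookup (monoI I) v * D ^ prod_encode v)"
    unfolding kron_def keys_mono ..
  also have "\<dots> = (\<Sum>k<length I. D ^ prod_encode (k, I ! k))"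
    by (subst sum.reindex) (auto intro: inj_onI simp: lookup_mono)
  finally show ?thesis .
qed

definition mev :: "((nat \<times> nat) \<Rightarrow>\<^sub>0 nat) \<Rightarrow> (nat \<times> nat \<Rightarrow> complex) \<Rightarrow> complex" where
  "mev \<alpha> x = (\<Prod>v\<in>Poly_Mapping.keys \<alpha>. x v ^ Poly_Mapping.lookup \<alpha> v)"

lemma mev_kron: "mev \<alpha> (\<lambda>v. w ^ (D ^ prod_encode v)) = w ^ kron D \<alpha>"
  unfolding mev_def kron_def power_sum by (simp add: power_mult[symmetric] mult.commute)

lemma mev_mono: "mev (monoI I) x = (\<Prod>k<length I. x (k, I ! k))"
proof -
  have "mev (monoI I) x = (\<Prod>v\<in>(\<lambda>k. (k, I ! k)) ` {..<length I}. x v ^ Poly_Mapping.lookup (monoI I) v)"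
    unfolding mev_def keys_mono ..
  also have "\<dots> = (\<Prod>k<length I. x (k, I ! k))"
    by (subst prod.reindex) (auto intro: inj_onI simp: lookup_mono)
  finally show ?thesis .
qed


lemma finite_idx: "finite (idx n)"
proof -
  have "idx n \<subseteq> {xs. set xs \<subseteq> {..sum_list n} \<and> length xs = length n}"
  proof
    fix I assume "I \<in> idx n"
    then have I: "length I = length n" "\<And>k. k < length n \<Longrightarrow> I ! k < n ! k" by (auto simp: idx_def)
    have "set I \<subseteq> {..sum_list n}"
    proof
      fix a assume "a \<in> set I"
      then obtain k where "k < length I" "a = I ! k" by (auto simp: in_set_conv_nth)
      then show "a \<in> {..sum_list n}" using I elem_le_sum_list[of k n] by fastforce
    qed
    then show "I \<in> {xs. set xs \<subseteq> {..sum_list n} \<and> length xs = length n}" using I by simp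
  qed
  then show ?thesis using finite_lists_length_eq[of "{..sum_list n}" "length n"] finite_subset by blast
qed

lemma poly_eval_mev: "poly_eval p x = (\<Sum>\<alpha>\<in>Poly_Mapping.keys p. Poly_Mapping.lookup p \<alpha> * mev \<alpha> x)"
  unfolding poly_eval_def mev_def ..

lemma Hform_mev: "Hform n H x = (\<Sum>I\<in>idx n. \<Sum>J\<in>idx n. H I J * cnj (mev (monoI I) x) * mev (monoI J) x)"
  unfolding Hform_def
proof (intro sum.cong refl)
  fix I J assume "I \<in> idx n" "J \<in> idx n"
  then have l: "length I = length n" "length J = length n" by (auto simp: idx_def)
  show "H I J * cnj ((\<Prod>k<length n. x (k, I ! k)) * (\<Prod>k<length n. cnj (x (k, J ! k)))) =
        H I J * cnj (mev (monoI I) x) * mev (monoI J) x"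
    unfolding mev_mono l by simp
qed

lemma sum_Sigma_fun:
  assumes "finite A" "\<And>x. x \<in> A \<Longrightarrow> finite (B x)"
  shows "sum f (Sigma A B) = (\<Sum>x\<in>A. \<Sum>y\<in>B x. f (x,y))"
  using sum.Sigma[of A B "\<lambda>x y. f (x,y)"] assms by simp

lemma sum_prod_fun:
  assumes "finite A" "finite B"
  shows "sum f (A \<times> B) = (\<Sum>x\<in>A. \<Sum>y\<in>B. f (x,y))"
  using sum_Sigma_fun[of A "\<lambda>_. B" f] assms by simp

lemma hsos_coeff:
  fixes ps :: "cpoly list"
  assumes h: "\<And>x. Hform n H x = complex_of_real (\<Sum>p\<leftarrow>ps. (cmod (poly_eval p x))\<^sup>2)"
    and I0: "I0 \<in> idx n" and J0: "J0 \<in> idx n"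
  shows "H I0 J0 = (\<Sum>p\<leftarrow>ps. Poly_Mapping.lookup p (monoI J0) * cnj (Poly_Mapping.lookup p (monoI I0)))"
proof -
  define L where "L = length ps"
  define P where "P i = ps ! i" for i
  define D where "D = 2 + (\<Sum>i<L. \<Sum>\<alpha>\<in>Poly_Mapping.keys (P i). \<Sum>v\<in>Poly_Mapping.keys \<alpha>. Poly_Mapping.lookup \<alpha> v)"
  have Dexp: "Poly_Mapping.lookup \<alpha> v < D" if i: "i < L" and a: "\<alpha> \<in> Poly_Mapping.keys (P i)" for i \<alpha> v
  proof (cases "v \<in> Poly_Mapping.keys \<alpha>")
    case True
    have "Poly_Mapping.lookup \<alpha> v \<le> (\<Sum>v\<in>Poly_Mapping.keys \<alpha>. Poly_Mapping.lookup \<alpha> v)"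
      using True by (intro member_le_sum) auto
    also have "\<dots> \<le> (\<Sum>\<alpha>\<in>Poly_Mapping.keys (P i). \<Sum>v\<in>Poly_Mapping.keys \<alpha>. Poly_Mapping.lookup \<alpha> v)"
      using a by (intro member_le_sum[where f="\<lambda>\<alpha>. \<Sum>v\<in>Poly_Mapping.keys \<alpha>. Poly_Mapping.lookup \<alpha> v"]) auto
    also have "\<dots> \<le> (\<Sum>i<L. \<Sum>\<alpha>\<in>Poly_Mapping.keys (P i). \<Sum>v\<in>Poly_Mapping.keys \<alpha>. Poly_Mapping.lookup \<alpha> v)"
      using i by (intro member_le_sum[where f="\<lambda>i. \<Sum>\<alpha>\<in>Poly_Mapping.keys (P i). \<Sum>v\<in>Poly_Mapping.keys \<alpha>. Poly_Mapping.lookup \<alpha> v"]) auto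
    finally show ?thesis unfolding D_def by linarith
  next
    case False then show ?thesis by (simp add: in_keys_iff D_def)
  qed
  have Dmono: "Poly_Mapping.lookup (monoI I) v < D" for I v
    by (simp add: lookup_mono D_def)
  let ?T = "SIGMA i:{..<L}. Poly_Mapping.keys (P i) \<times> Poly_Mapping.keys (P i)"
  let ?S = "idx n \<times> idx n"
  have finT: "finite ?T" by auto
  have finS: "finite ?S" using finite_idx by auto
  have main: "(\<Sum>s\<in>?S. H (fst s) (snd s) * w^(kron D (monoI (snd s))) * cnj w^(kron D (monoI (fst s))))
      = (\<Sum>t\<in>?T. (Poly_Mapping.lookup (P (fst t)) (fst (snd t)) * cnj (Poly_Mapping.lookup (P (fst t)) (snd (snd t))))
             * w^(kron D (fst (snd t))) * cnj w^(kron D (snd (snd t))))" for w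
  proof -
    define x where "x = (\<lambda>v. w ^ (D ^ prod_encode v))"
    have "(\<Sum>s\<in>?S. H (fst s) (snd s) * w^(kron D (monoI (snd s))) * cnj w^(kron D (monoI (fst s))))
        = Hform n H x"
      unfolding Hform_mev x_def mev_kron
      by (simp add: sum.cartesian_product split_def mult_ac)
    also have "\<dots> = (\<Sum>i<L. poly_eval (P i) x * cnj (poly_eval (P i) x))"
      unfolding h L_def P_def sum_list_sum_nth of_real_sum atLeast0LessThan
      by (intro sum.cong) (simp_all add: complex_norm_square del: of_real_power)
    also have "\<dots> = (\<Sum>i<L. \<Sum>\<alpha>\<in>Poly_Mapping.keys (P i). \<Sum>\<beta>\<in>Poly_Mapping.keys (P i).
         (Poly_Mapping.lookup (P i) \<alpha> * cnj (Poly_Mapping.lookup (P i) \<beta>)) * w^(kron D \<alpha>) * cnj w^(kron D \<beta>))"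
      unfolding poly_eval_mev x_def mev_kron
      by (simp add: sum_distrib_left sum_distrib_right mult_ac) (rule sum.cong[OF refl], rule sum.swap)
    also have "\<dots> = (\<Sum>t\<in>?T. (Poly_Mapping.lookup (P (fst t)) (fst (snd t)) * cnj (Poly_Mapping.lookup (P (fst t)) (snd (snd t))))
             * w^(kron D (fst (snd t))) * cnj w^(kron D (snd (snd t))))"
      by (simp add: sum_Sigma_fun sum_prod_fun)
    finally show ?thesis .
  qed
  note ce = coeff_extract[OF finS finT main, where a="kron D (monoI J0)" and b="kron D (monoI I0)"]
  have lI0: "length I0 = length n" and lJ0: "length J0 = length n" using I0 J0 by (auto simp: idx_def)
  have setS: "{s\<in>?S. kron D (monoI (snd s)) = kron D (monoI J0) \<and> kron D (monoI (fst s)) = kron D (monoI I0)} = {(I0,J0)}"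
  proof (rule set_eqI, rule iffI)
    fix s assume s: "s \<in> {s\<in>?S. kron D (monoI (snd s)) = kron D (monoI J0) \<and> kron D (monoI (fst s)) = kron D (monoI I0)}"
    obtain I J where sIJ: "s = (I, J)" by force
    have IJ: "I \<in> idx n" "J \<in> idx n" and e1: "kron D (monoI J) = kron D (monoI J0)"
      and e2: "kron D (monoI I) = kron D (monoI I0)" using s sIJ by auto
    have l: "length I = length n" "length J = length n" using IJ by (auto simp: idx_def)
    from e1 have "monoI J = monoI J0" using kron_inj[OF Dmono Dmono] by simp
    then have "J = J0" using mono_inj l lJ0 by simp
    moreover from e2 have "monoI I = monoI I0" using kron_inj[OF Dmono Dmono] by simp
    then have "I = I0" using mono_inj l lI0 by simp
    ultimately show "s \<in> {(I0, J0)}" using sIJ by simp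
  qed (use I0 J0 in auto)
  have lhs: "(\<Sum>s\<in>{s\<in>?S. kron D (monoI (snd s)) = kron D (monoI J0) \<and> kron D (monoI (fst s)) = kron D (monoI I0)}. H (fst s) (snd s)) = H I0 J0"
    unfolding setS by simp
  let ?g = "\<lambda>t. Poly_Mapping.lookup (P (fst t)) (fst (snd t)) * cnj (Poly_Mapping.lookup (P (fst t)) (snd (snd t)))"
  have "(\<Sum>t\<in>{t\<in>?T. kron D (fst (snd t)) = kron D (monoI J0) \<and> kron D (snd (snd t)) = kron D (monoI I0)}. ?g t)
     = (\<Sum>t\<in>?T. if fst (snd t) = monoI J0 \<and> snd (snd t) = monoI I0 then ?g t else 0)"
    unfolding sum.inter_filter[OF finT]
  proof (rule sum.cong[OF refl])
    fix t assume t: "t \<in> ?T"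
    then have i: "fst t < L" "fst (snd t) \<in> Poly_Mapping.keys (P (fst t))" "snd (snd t) \<in> Poly_Mapping.keys (P (fst t))"
      by auto
    have "kron D (fst (snd t)) = kron D (monoI J0) \<longleftrightarrow> fst (snd t) = monoI J0"
      using kron_inj[OF Dexp[OF i(1,2)] Dmono] by auto
    moreover have "kron D (snd (snd t)) = kron D (monoI I0) \<longleftrightarrow> snd (snd t) = monoI I0"
      using kron_inj[OF Dexp[OF i(1,3)] Dmono] by auto
    ultimately show "(if kron D (fst (snd t)) = kron D (monoI J0) \<and> kron D (snd (snd t)) = kron D (monoI I0) then ?g t else 0)
       = (if fst (snd t) = monoI J0 \<and> snd (snd t) = monoI I0 then ?g t else 0)" by simp
  qed
  also have "\<dots> = (\<Sum>i<L. \<Sum>\<alpha>\<in>Poly_Mapping.keys (P i). \<Sum>\<beta>\<in>Poly_Mapping.keys (P i).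
       if \<alpha> = monoI J0 \<and> \<beta> = monoI I0 then Poly_Mapping.lookup (P i) \<alpha> * cnj (Poly_Mapping.lookup (P i) \<beta>) else 0)"
    by (simp add: sum_Sigma_fun sum_prod_fun) (intro sum.cong refl, auto)
  also have "\<dots> = (\<Sum>i<L. Poly_Mapping.lookup (P i) (monoI J0) * cnj (Poly_Mapping.lookup (P i) (monoI I0)))"
  proof (rule sum.cong[OF refl])
    fix i
    let ?K = "Poly_Mapping.keys (P i)"
    have "(\<Sum>\<alpha>\<in>?K. \<Sum>\<beta>\<in>?K. if \<alpha> = monoI J0 \<and> \<beta> = monoI I0 then Poly_Mapping.lookup (P i) \<alpha> * cnj (Poly_Mapping.lookup (P i) \<beta>) else 0)
      = (\<Sum>\<alpha>\<in>?K. if \<alpha> = monoI J0 then (\<Sum>\<beta>\<in>?K. if \<beta> = monoI I0 then Poly_Mapping.lookup (P i) \<alpha> * cnj (Poly_Mapping.lookup (P i) \<beta>) else 0) else 0)"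
      by (intro sum.cong refl) auto
    also have "\<dots> = (if monoI J0 \<in> ?K then (if monoI I0 \<in> ?K then Poly_Mapping.lookup (P i) (monoI J0) * cnj (Poly_Mapping.lookup (P i) (monoI I0)) else 0) else 0)"
      by (simp add: sum.delta')
    also have "\<dots> = Poly_Mapping.lookup (P i) (monoI J0) * cnj (Poly_Mapping.lookup (P i) (monoI I0))"
      by (auto simp: in_keys_iff)
    finally show "(\<Sum>\<alpha>\<in>?K. \<Sum>\<beta>\<in>?K. if \<alpha> = monoI J0 \<and> \<beta> = monoI I0 then Poly_Mapping.lookup (P i) \<alpha> * cnj (Poly_Mapping.lookup (P i) \<beta>) else 0)
      = Poly_Mapping.lookup (P i) (monoI J0) * cnj (Poly_Mapping.lookup (P i) (monoI I0))" .
  qed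
  also have "\<dots> = (\<Sum>p\<leftarrow>ps. Poly_Mapping.lookup p (monoI J0) * cnj (Poly_Mapping.lookup p (monoI I0)))"
    unfolding sum_list_sum_nth L_def P_def by (simp add: atLeast0LessThan)
  finally show ?thesis using ce lhs by simp
qed

definition bf :: "nat \<Rightarrow> (nat \<Rightarrow> nat \<Rightarrow> complex) \<Rightarrow> (nat \<Rightarrow> complex) \<Rightarrow> (nat \<Rightarrow> complex) \<Rightarrow> complex" where
  "bf N M v w = (\<Sum>a<N. \<Sum>b<N. cnj (v a) * M a b * w b)"

lemma psd_iff: "psd N M \<longleftrightarrow> (\<forall>a<N. \<forall>b<N. M a b = cnj (M b a)) \<and> (\<forall>v. Im (bf N M v v) = 0 \<and> Re (bf N M v v) \<ge> 0)"
  unfolding psd_def bf_def Let_def ..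

lemma bf_add_left: "bf N M (\<lambda>a. v a + w a) x = bf N M v x + bf N M w x"
  unfolding bf_def by (simp add: algebra_simps sum.distrib)

lemma bf_add_right: "bf N M x (\<lambda>a. v a + w a) = bf N M x v + bf N M x w"
  unfolding bf_def by (simp add: algebra_simps sum.distrib)

lemma bf_delta_right:
  assumes "p < N"
  shows "bf N M v (\<lambda>b. if b = p then t else 0) = (\<Sum>a<N. cnj (v a) * M a p) * t"
proof -
  have "bf N M v (\<lambda>b. if b = p then t else 0) = (\<Sum>a<N. \<Sum>b<N. if b = p then cnj (v a) * M a p * t else 0)"
    unfolding bf_def by (intro sum.cong refl) auto
  also have "\<dots> = (\<Sum>a<N. cnj (v a) * M a p * t)" using assms by (simp add: sum.delta')
  finally show ?thesis by (simp add: sum_distrib_right)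
qed

lemma bf_delta_left:
  assumes "p < N"
  shows "bf N M (\<lambda>a. if a = p then t else 0) w = cnj t * (\<Sum>b<N. M p b * w b)"
proof -
  have "bf N M (\<lambda>a. if a = p then t else 0) w = (\<Sum>a<N. if a = p then (\<Sum>b<N. cnj t * M p b * w b) else 0)"
    unfolding bf_def by (intro sum.cong refl) auto
  also have "\<dots> = (\<Sum>b<N. cnj t * M p b * w b)" using assms by (simp add: sum.delta')
  finally show ?thesis by (simp add: sum_distrib_left mult.assoc)
qed

lemma bf_delta_both:
  assumes "p < N" "q < N"
  shows "bf N M (\<lambda>a. if a = p then t else 0) (\<lambda>b. if b = q then s else 0) = cnj t * M p q * s"
proof -
  have "(\<Sum>b<N. M p b * (if b = q then s else 0)) = (\<Sum>b<N. if b = q then M p q * s else 0)"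
    by (intro sum.cong refl) auto
  also have "\<dots> = M p q * s" using assms(2) by (simp add: sum.delta')
  finally show ?thesis using bf_delta_left[OF assms(1), of M t] by (simp add: mult.assoc)
qed

lemma psd_diag:
  assumes "psd N M" "p < N"
  shows "Im (M p p) = 0" "Re (M p p) \<ge> 0"
proof -
  have "bf N M (\<lambda>a. if a = p then 1 else 0) (\<lambda>a. if a = p then 1 else 0) = M p p"
    using bf_delta_both[OF assms(2) assms(2)] by simp
  then show "Im (M p p) = 0" "Re (M p p) \<ge> 0" using assms(1) unfolding psd_iff by metis+
qed

lemma psd_zero_row:
  assumes psd: "psd N M" and p: "p < N" and b: "b < N" and z: "M p p = 0"
  shows "M p b = 0"
proof (rule ccontr)
  assume nz: "M p b \<noteq> 0"
  then have pb: "p \<noteq> b" using z by auto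
  have herm: "M b p = cnj (M p b)" using psd p b unfolding psd_iff by blast
  define zz where "zz = M p b"
  define s :: real where "s = (\<bar>Re (M b b)\<bar> + 1) / (2 * (cmod zz)\<^sup>2)"
  define t where "t = - of_real s * zz"
  define v where "v = (\<lambda>a. (if a = b then 1 else 0) + (if a = p then t else 0))"
  have "bf N M v v = bf N M (\<lambda>a. if a = b then 1 else 0) (\<lambda>a. if a = b then 1 else 0)
     + bf N M (\<lambda>a. if a = b then 1 else 0) (\<lambda>a. if a = p then t else 0)
     + bf N M (\<lambda>a. if a = p then t else 0) (\<lambda>a. if a = b then 1 else 0)
     + bf N M (\<lambda>a. if a = p then t else 0) (\<lambda>a. if a = p then t else 0)"
    unfolding v_def bf_add_left bf_add_right by simp
  also have "\<dots> = M b b + M b p * t + cnj t * M p b + cnj t * M p p * t"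
    using bf_delta_both p b by simp
  also have "\<dots> = M b b + cnj zz * t + cnj t * zz" using z herm zz_def by simp
  also have "\<dots> = M b b - of_real (2 * s * (cmod zz)\<^sup>2)"
    unfolding t_def by (simp add: complex_norm_square[symmetric] algebra_simps) 
  finally have q: "bf N M v v = M b b - of_real (2 * s * (cmod zz)\<^sup>2)" .
  have "zz \<noteq> 0" using nz zz_def by simp
  then have "2 * s * (cmod zz)\<^sup>2 = \<bar>Re (M b b)\<bar> + 1" unfolding s_def by (simp add: field_simps)
  then have "Re (bf N M v v) = Re (M b b) - (\<bar>Re (M b b)\<bar> + 1)" using q by simp
  also have "\<dots> < 0" by linarith
  finally show False using psd unfolding psd_iff by (meson not_le)
qed

lemma psd_schur:
  assumes psd: "psd N M" and p: "p < N" and r: "Re (M p p) > 0"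
  shows "psd N (\<lambda>a b. M a b - cnj (M p a / of_real (sqrt (Re (M p p)))) * (M p b / of_real (sqrt (Re (M p p)))))"
proof -
  define r where "r = Re (M p p)"
  define u where "u a = M p a / of_real (sqrt r)" for a
  have r0: "r > 0" using r r_def by simp
  have im0: "Im (M p p) = 0" by (rule psd_diag(1)[OF psd p])
  have Mpp: "M p p = of_real r" unfolding r_def by (rule complex_eqI) (simp_all add: im0)
  have herm: "\<And>a b. a < N \<Longrightarrow> b < N \<Longrightarrow> M a b = cnj (M b a)"
    using psd[unfolded psd_iff, THEN conjunct1] by blast
  let ?M' = "\<lambda>a b. M a b - cnj (u a) * u b"
  have "psd N ?M'"
    unfolding psd_iff
  proof (intro conjI allI impI)
    fix a b assume "a < N" "b < N"
    then have "M a b = cnj (M b a)" using herm by blast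
    then show "?M' a b = cnj (?M' b a)" by simp
  next
    fix v
    define s where "s = (\<Sum>b<N. M p b * v b)"
    define t where "t = - s / of_real r"
    define e where "e = (\<lambda>a::nat. if a = p then t else 0)"
    have sq: "of_real (sqrt r) * of_real (sqrt r) = (of_real r :: complex)"
    proof -
      have "sqrt r * sqrt r = r" using r0 by simp
      then show ?thesis unfolding of_real_mult[symmetric] by simp
    qed
    have sqnz: "(of_real (sqrt r) :: complex) \<noteq> 0" using r0 by simp
    have us: "(\<Sum>b<N. u b * v b) = s / of_real (sqrt r)"
      unfolding u_def s_def by (simp add: sum_divide_distrib)
    have "bf N ?M' v v = bf N M v v - (\<Sum>a<N. \<Sum>b<N. cnj (u a * v a) * (u b * v b))"
      unfolding bf_def by (simp add: algebra_simps sum_subtractf)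
    also have "(\<Sum>a<N. \<Sum>b<N. cnj (u a * v a) * (u b * v b)) = cnj (\<Sum>a<N. u a * v a) * (\<Sum>b<N. u b * v b)"
      by (simp add: sum_distrib_left sum_distrib_right cnj_sum) (rule sum.swap)
    also have "\<dots> = cnj s * s / of_real r"
      unfolding us using sq sqnz by (simp add: field_simps)
    finally have q1: "bf N ?M' v v = bf N M v v - cnj s * s / of_real r" .
    have cs: "(\<Sum>a<N. cnj (v a) * M a p) = cnj s"
      unfolding s_def cnj_sum
    proof (intro sum.cong refl)
      fix a assume "a \<in> {..<N}"
      then have "M a p = cnj (M p a)" using herm p by blast
      then show "cnj (v a) * M a p = cnj (M p a * v a)" by (simp add: mult.commute)
    qed
    have "bf N M (\<lambda>a. v a + e a) (\<lambda>a. v a + e a) = bf N M v v + bf N M v e + bf N M e v + bf N M e e"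
      unfolding bf_add_left bf_add_right by simp
    also have "\<dots> = bf N M v v + cnj s * t + cnj t * s + cnj t * of_real r * t"
      unfolding e_def bf_delta_both[OF p p] bf_delta_right[OF p] bf_delta_left[OF p] cs s_def[symmetric] Mpp ..
    also have "\<dots> = bf N M v v - cnj s * s / of_real r"
      unfolding t_def using r0 by (simp add: field_simps)
    finally have "bf N ?M' v v = bf N M (\<lambda>a. v a + e a) (\<lambda>a. v a + e a)" using q1 by simp
    then show "Im (bf N ?M' v v) = 0" "Re (bf N ?M' v v) \<ge> 0" using psd unfolding psd_iff by simp_all
  qed
  then show ?thesis unfolding u_def r_def .
qed

lemma psd_decomp_aux:
  "\<forall>M. psd N M \<longrightarrow> (\<forall>a<N. \<forall>b<N. (k \<le> a \<or> k \<le> b) \<longrightarrow> M a b = 0) \<longrightarrow>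
     (\<exists>us. \<forall>a<N. \<forall>b<N. M a b = (\<Sum>u\<leftarrow>us. cnj (u a) * u b))"
proof (induction k)
  case 0
  show ?case
  proof (intro allI impI)
    fix M :: "nat \<Rightarrow> nat \<Rightarrow> complex"
    assume "\<forall>a<N. \<forall>b<N. (0 \<le> a \<or> 0 \<le> b) \<longrightarrow> M a b = 0"
    then show "\<exists>us. \<forall>a<N. \<forall>b<N. M a b = (\<Sum>u\<leftarrow>us. cnj (u a) * u b)"
      by (intro exI[of _ "[]"]) simp
  qed
next
  case (Suc k)
  show ?case
  proof (intro allI impI)
    fix M :: "nat \<Rightarrow> nat \<Rightarrow> complex"
    assume psd: "psd N M" and supp: "\<forall>a<N. \<forall>b<N. (Suc k \<le> a \<or> Suc k \<le> b) \<longrightarrow> M a b = 0"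
    have herm: "\<And>a b. a < N \<Longrightarrow> b < N \<Longrightarrow> M a b = cnj (M b a)"
      using psd[unfolded psd_iff, THEN conjunct1] by blast
    show "\<exists>us. \<forall>a<N. \<forall>b<N. M a b = (\<Sum>u\<leftarrow>us. cnj (u a) * u b)"
    proof (cases "k < N")
      case False
      then have "\<forall>a<N. \<forall>b<N. (k \<le> a \<or> k \<le> b) \<longrightarrow> M a b = 0" by auto
      then show ?thesis using Suc.IH psd by blast
    next
      case kN: True
      show ?thesis
      proof (cases "Re (M k k) = 0")
        case True
        have im0: "Im (M k k) = 0" by (rule psd_diag(1)[OF psd kN])
        have Mkk: "M k k = 0" using True im0 by (simp add: complex_eq_iff)
        have row: "M k b = 0" if "b < N" for b using psd_zero_row[OF psd kN that Mkk] .
        have col: "M a k = 0" if "a < N" for a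
        proof -
          have "M a k = cnj (M k a)" using herm that kN by blast
          then show ?thesis using row[OF that] by simp
        qed
        have "\<forall>a<N. \<forall>b<N. (k \<le> a \<or> k \<le> b) \<longrightarrow> M a b = 0"
        proof (intro allI impI)
          fix a b assume a: "a < N" and b: "b < N" and kab: "k \<le> a \<or> k \<le> b"
          show "M a b = 0"
          proof (cases "a = k \<or> b = k")
            case True then show ?thesis using row col a b by auto
          next
            case False then have "Suc k \<le> a \<or> Suc k \<le> b" using kab by auto
            then show ?thesis using supp a b by blast
          qed
        qed
        then show ?thesis using Suc.IH psd by blast
      next
        case False
        have im0: "Im (M k k) = 0" by (rule psd_diag(1)[OF psd kN])
        have r0: "Re (M k k) > 0" using False psd_diag(2)[OF psd kN] by linarith
        define r where "r = Re (M k k)"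
        define u where "u a = M k a / of_real (sqrt r)" for a
        define M' where "M' a b = M a b - cnj (u a) * u b" for a b
        have psd': "psd N M'" unfolding M'_def u_def r_def by (rule psd_schur[OF psd kN r0])
        have rpos: "r > 0" using r0 r_def by simp
        have Mkk: "M k k = of_real r" unfolding r_def by (rule complex_eqI) (simp_all add: im0)
        have sq: "of_real (sqrt r) * of_real (sqrt r) = (of_real r :: complex)"
        proof -
          have "sqrt r * sqrt r = r" using rpos by simp
          then show ?thesis unfolding of_real_mult[symmetric] by simp
        qed
        have sqnz: "(of_real (sqrt r) :: complex) \<noteq> 0" using rpos by simp
        have rnz: "(of_real r :: complex) \<noteq> 0" using rpos by simp
        have uk: "cnj (u k) = of_real (sqrt r)" unfolding u_def Mkk using sq sqnz
          by (simp add: field_simps)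
        have uk2: "u k = of_real (sqrt r)" unfolding u_def Mkk using sq sqnz
          by (simp add: field_simps)
        have "\<forall>a<N. \<forall>b<N. (k \<le> a \<or> k \<le> b) \<longrightarrow> M' a b = 0"
        proof (intro allI impI)
          fix a b assume a: "a < N" and b: "b < N" and kab: "k \<le> a \<or> k \<le> b"
          show "M' a b = 0"
          proof (cases "a = k")
            case True
            have "cnj (u k) * u b = M k b" unfolding uk unfolding u_def using sqnz by simp
            then show ?thesis unfolding M'_def True by simp
          next
            case ak: False
            show ?thesis
            proof (cases "b = k")
              case True
              have "M a k = cnj (M k a)" using herm a kN by blast
              moreover have "cnj (u a) * u k = cnj (M k a)" unfolding uk2 unfolding u_def using sqnz by simp
              ultimately show ?thesis unfolding M'_def True by simp
            next
              case bk: False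
              then have kk: "Suc k \<le> a \<or> Suc k \<le> b" using kab ak by auto
              then have "M a b = 0" using supp a b by blast
              moreover have "u a = 0 \<or> u b = 0" unfolding u_def using kk supp a b kN by auto
              ultimately show ?thesis unfolding M'_def by auto
            qed
          qed
        qed
        then obtain us where us: "\<forall>a<N. \<forall>b<N. M' a b = (\<Sum>u\<leftarrow>us. cnj (u a) * u b)"
          using Suc.IH psd' by blast
        show ?thesis
        proof (intro exI[of _ "u # us"] allI impI)
          fix a b assume "a < N" "b < N"
          then have "M' a b = (\<Sum>u\<leftarrow>us. cnj (u a) * u b)" using us by blast
          then show "M a b = (\<Sum>u\<leftarrow>u # us. cnj (u a) * u b)" unfolding M'_def by (simp add: algebra_simps)
        qed
      qed
    qed
  qed
qed

lemma psd_decomp: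
  assumes "psd N M"
  shows "\<exists>us. \<forall>a<N. \<forall>b<N. M a b = (\<Sum>u\<leftarrow>us. cnj (u a) * u b)"
  using psd_decomp_aux[of N N] assms by auto


lemma unflat_idx: "a < prod_list n \<Longrightarrow> unflat n a \<in> idx n"
proof (induction n arbitrary: a)
  case Nil then show ?case by (simp add: idx_def)
next
  case (Cons k ns)
  let ?P = "prod_list ns"
  have aP: "a < k * ?P" using Cons.prems by simp
  then have P0: "?P > 0" by (cases "?P = 0") auto
  have d: "a div ?P < k" using aP P0 by (simp add: div_less_iff_less_mult mult.commute)
  have m: "unflat ns (a mod ?P) \<in> idx ns" using Cons.IH P0 by simp
  show ?case
    unfolding idx_def
  proof (simp, intro conjI allI impI)
    show "length (unflat ns (a mod ?P)) = length ns" using m by (simp add: idx_def)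
  next
    fix j assume j: "j < Suc (length ns)"
    show "(a div ?P # unflat ns (a mod ?P)) ! j < (k # ns) ! j"
    proof (cases j)
      case 0 then show ?thesis using d by simp
    next
      case (Suc j') then show ?thesis using m j by (simp add: idx_def)
    qed
  qed
qed

lemma unflat_inj: "inj_on (unflat n) {..<prod_list n}"
proof (induction n)
  case Nil then show ?case by (auto simp: inj_on_def)
next
  case (Cons k ns)
  let ?P = "prod_list ns"
  show ?case
  proof (rule inj_onI)
    fix a b assume a: "a \<in> {..<prod_list (k # ns)}" and b: "b \<in> {..<prod_list (k # ns)}"
      and e: "unflat (k # ns) a = unflat (k # ns) b"
    have "a < k * ?P" using a by simp
    then have P0: "?P > 0" by (cases "?P = 0") auto
    from e have e1: "a div ?P = b div ?P" and e2: "unflat ns (a mod ?P) = unflat ns (b mod ?P)" by auto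
    from e2 have "a mod ?P = b mod ?P" using Cons.IH P0 by (auto dest: inj_onD)
    with e1 show "a = b" by (metis div_mult_mod_eq)
  qed
qed

lemma unflat_surj: "I \<in> idx n \<Longrightarrow> \<exists>a<prod_list n. unflat n a = I"
proof (induction n arbitrary: I)
  case Nil then show ?case by (simp add: idx_def)
next
  case (Cons k ns)
  let ?P = "prod_list ns"
  from Cons.prems obtain i I' where I: "I = i # I'" by (cases I) (auto simp: idx_def)
  have i: "i < k" using Cons.prems I by (force simp: idx_def)
  have I': "I' \<in> idx ns" using Cons.prems I unfolding idx_def by force
  obtain a' where a': "a' < ?P" "unflat ns a' = I'" using Cons.IH[OF I'] by blast
  define a where "a = i * ?P + a'"
  have "a < (i + 1) * ?P" using a' unfolding a_def by simp
  also have "\<dots> \<le> k * ?P" using i by (intro mult_right_mono) auto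
  finally have ak: "a < prod_list (k # ns)" by simp
  have P0: "?P > 0" using a' by simp
  have "a div ?P = i" unfolding a_def using a' P0 by simp
  moreover have "a mod ?P = a'" unfolding a_def using a' by simp
  ultimately have "unflat (k # ns) a = I" using I a' by simp
  with ak show ?case by blast
qed

lemma unflat_bij: "bij_betw (unflat n) {..<prod_list n} (idx n)"
  unfolding bij_betw_def
proof
  show "inj_on (unflat n) {..<prod_list n}" by (rule unflat_inj)
  show "unflat n ` {..<prod_list n} = idx n"
    using unflat_idx unflat_surj by fastforce
qed

lemma sum_idx: "(\<Sum>I\<in>idx n. g I) = (\<Sum>a<prod_list n. g (unflat n a))"
  using sum.reindex_bij_betw[OF unflat_bij, of g n] by simp

lemma core_gram:
  fixes f :: "'x \<Rightarrow> nat \<Rightarrow> complex"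
  shows "(\<Sum>a<N. \<Sum>b<N. (\<Sum>x\<leftarrow>xs. cnj (f x a) * f x b) * cnj (w a) * w b)
       = (\<Sum>x\<leftarrow>xs. cnj (\<Sum>a<N. f x a * w a) * (\<Sum>b<N. f x b * w b))"
proof (induction xs)
  case Nil then show ?case by simp
next
  case (Cons y xs)
  have "(\<Sum>a<N. \<Sum>b<N. (\<Sum>x\<leftarrow>y # xs. cnj (f x a) * f x b) * cnj (w a) * w b)
     = (\<Sum>a<N. \<Sum>b<N. cnj (f y a * w a) * (f y b * w b))
       + (\<Sum>a<N. \<Sum>b<N. (\<Sum>x\<leftarrow>xs. cnj (f x a) * f x b) * cnj (w a) * w b)"
    by (simp add: sum.distrib[symmetric] algebra_simps)
  also have "(\<Sum>a<N. \<Sum>b<N. cnj (f y a * w a) * (f y b * w b)) = cnj (\<Sum>a<N. f y a * w a) * (\<Sum>b<N. f y b * w b)"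
    by (simp add: sum_distrib_left sum_distrib_right cnj_sum) (rule sum.swap)
  finally show ?case using Cons.IH by simp
qed

lemma of_real_sum_list_cmod:
  "(\<Sum>x\<leftarrow>xs. cnj (g x) * g x) = complex_of_real (\<Sum>x\<leftarrow>xs. (cmod (g x))\<^sup>2)"
proof (induction xs)
  case Nil then show ?case by simp
next
  case (Cons y xs)
  have "cnj (g y) * g y = complex_of_real ((cmod (g y))\<^sup>2)"
    using complex_norm_square[of "g y"] by (simp add: mult.commute del: of_real_power)
  then show ?case using Cons.IH by simp
qed

lemma poly_eval_superset:
  assumes "finite S" "Poly_Mapping.keys p \<subseteq> S"
  shows "poly_eval p x = (\<Sum>\<alpha>\<in>S. Poly_Mapping.lookup p \<alpha> * mev \<alpha> x)"
  unfolding poly_eval_mev using assms by (intro sum.mono_neutral_left) (auto simp: in_keys_iff)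

lemma keys_sum_single:
  "Poly_Mapping.keys (\<Sum>b\<in>B. Poly_Mapping.single (m b) (c b)) \<subseteq> m ` B"
  using keys_sum[of "\<lambda>b. Poly_Mapping.single (m b) (c b)" B] by (auto split: if_splits)

lemma poly_eval_sum_single:
  fixes c :: "'b \<Rightarrow> complex"
  assumes B: "finite B"
  shows "poly_eval (\<Sum>b\<in>B. Poly_Mapping.single (m b) (c b)) x = (\<Sum>b\<in>B. c b * mev (m b) x)"
proof -
  let ?p = "\<Sum>b\<in>B. Poly_Mapping.single (m b) (c b)"
  have "poly_eval ?p x = (\<Sum>\<alpha>\<in>m ` B. Poly_Mapping.lookup ?p \<alpha> * mev \<alpha> x)"
    using B by (intro poly_eval_superset[OF _ keys_sum_single]) auto
  also have "\<dots> = (\<Sum>\<alpha>\<in>m ` B. \<Sum>b\<in>B. if m b = \<alpha> then c b * mev \<alpha> x else 0)"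
    unfolding lookup_sum lookup_single sum_distrib_right
    by (intro sum.cong refl) (auto simp: when_def)
  also have "\<dots> = (\<Sum>b\<in>B. \<Sum>\<alpha>\<in>m ` B. if m b = \<alpha> then c b * mev \<alpha> x else 0)"
    by (rule sum.swap)
  also have "\<dots> = (\<Sum>b\<in>B. c b * mev (m b) x)"
    using B by (intro sum.cong refl) (simp add: sum.delta)
  finally show ?thesis .
qed


theorem proposition5p7:
  fixes n :: "nat list" and H :: "nat list \<Rightarrow> nat list \<Rightarrow> complex"
  assumes "herm_tensor n H"
  shows "HSOS n H \<longleftrightarrow> psd (prod_list n) (flattening n H)"
proof
  assume "HSOS n H"
  then obtain ps :: "cpoly list" where h: "\<And>x. Hform n H x = complex_of_real (\<Sum>p\<leftarrow>ps. (cmod (poly_eval p x))\<^sup>2)"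
    unfolding HSOS_def by blast
  define N where "N = prod_list n"
  define g where "g p b = Poly_Mapping.lookup p (monoI (unflat n b))" for p :: cpoly and b
  have coeff: "flattening n H a b = (\<Sum>p\<leftarrow>ps. cnj (g p a) * g p b)" if "a < N" "b < N" for a b
    unfolding flattening_def g_def using hsos_coeff[OF h unflat_idx unflat_idx] that N_def
    by (simp add: mult.commute)
  show "psd (prod_list n) (flattening n H)"
    unfolding psd_iff N_def[symmetric]
  proof (intro conjI allI impI)
    fix a b assume "a < N" "b < N"
    then show "flattening n H a b = cnj (flattening n H b a)"
      using assms unflat_idx N_def unfolding herm_tensor_def flattening_def by blast
  next
    fix v
    have "bf N (flattening n H) v v = (\<Sum>a<N. \<Sum>b<N. (\<Sum>p\<leftarrow>ps. cnj (g p a) * g p b) * cnj (v a) * v b)"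
      unfolding bf_def by (intro sum.cong refl) (simp add: coeff mult_ac)
    also have "\<dots> = (\<Sum>p\<leftarrow>ps. cnj (\<Sum>a<N. g p a * v a) * (\<Sum>b<N. g p b * v b))"
      by (rule core_gram)
    also have "\<dots> = complex_of_real (\<Sum>p\<leftarrow>ps. (cmod (\<Sum>b<N. g p b * v b))\<^sup>2)"
      by (rule of_real_sum_list_cmod)
    finally have q: "bf N (flattening n H) v v = complex_of_real (\<Sum>p\<leftarrow>ps. (cmod (\<Sum>b<N. g p b * v b))\<^sup>2)" .
    show "Im (bf N (flattening n H) v v) = 0" unfolding q by simp
    have "0 \<le> (\<Sum>p\<leftarrow>ps. (cmod (\<Sum>b<N. g p b * v b))\<^sup>2)" by (induction ps) auto
    then show "Re (bf N (flattening n H) v v) \<ge> 0" unfolding q by simp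
  qed
next
  assume psd: "psd (prod_list n) (flattening n H)"
  define N where "N = prod_list n"
  obtain us where us: "\<forall>a<N. \<forall>b<N. flattening n H a b = (\<Sum>u\<leftarrow>us. cnj (u a) * u b)"
    using psd_decomp[OF psd] N_def by blast
  define pol :: "(nat \<Rightarrow> complex) \<Rightarrow> cpoly" where
    "pol u = (\<Sum>b<N. Poly_Mapping.single (monoI (unflat n b)) (u b))" for u
  show "HSOS n H"
    unfolding HSOS_def
  proof (intro exI[of _ "map pol us"] conjI allI ballI)
    fix p assume "p \<in> set (map pol us)"
    then obtain u where p: "p = pol u" by auto
    show "poly_in_vars n p"
      unfolding poly_in_vars_def
    proof (intro ballI)
      fix \<alpha> v assume \<alpha>: "\<alpha> \<in> Poly_Mapping.keys p" and v: "v \<in> Poly_Mapping.keys \<alpha>"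
      from \<alpha> obtain b where b: "b < N" and \<alpha>b: "\<alpha> = monoI (unflat n b)"
        using keys_sum_single[of "\<lambda>b. monoI (unflat n b)" u "{..<N}"] unfolding p pol_def by blast
      have J: "unflat n b \<in> idx n" using b N_def unflat_idx by simp
      from v obtain k where k: "k < length (unflat n b)" "v = (k, unflat n b ! k)"
        unfolding \<alpha>b keys_mono by blast
      then show "fst v < length n \<and> snd v < n ! fst v" using J by (auto simp: idx_def)
    qed
  next
    fix x
    define E where "E a = mev (monoI (unflat n a)) x" for a
    have "Hform n H x = (\<Sum>a<N. \<Sum>b<N. H (unflat n a) (unflat n b) * cnj (E a) * E b)"
      unfolding Hform_mev sum_idx N_def E_def ..
    also have "\<dots> = (\<Sum>a<N. \<Sum>b<N. (\<Sum>u\<leftarrow>us. cnj (u a) * u b) * cnj (E a) * E b)"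
      using us unfolding flattening_def by (intro sum.cong refl) simp
    also have "\<dots> = (\<Sum>u\<leftarrow>us. cnj (\<Sum>a<N. u a * E a) * (\<Sum>b<N. u b * E b))"
      by (rule core_gram)
    also have "\<dots> = (\<Sum>u\<leftarrow>us. cnj (poly_eval (pol u) x) * poly_eval (pol u) x)"
      unfolding pol_def poly_eval_sum_single[OF finite_lessThan] E_def ..
    also have "\<dots> = complex_of_real (\<Sum>u\<leftarrow>us. (cmod (poly_eval (pol u) x))\<^sup>2)"
      by (rule of_real_sum_list_cmod)
    finally show "Hform n H x = complex_of_real (\<Sum>p\<leftarrow>map pol us. (cmod (poly_eval p x))\<^sup>2)"
      by (simp add: o_def)
  qed
qed


end
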